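(* Let $X(t)$ be a Markov process on microstates, partitioned into finitely many macrostates, with macroscopic time step $\tau>0$ and decorrelation times $\tau_I$, and let each macrostate $I$ have a quasistationary distribution $\eta_I$. Let $(X(t),R(t),C(t))$ be the augmented Markov chain with time step $\tau$ on augmented states $(x,I,s)$, and let $T$ be its Markov kernel, $$T(x,I,s;dy,J,t) = \mathbb P^{x,I,s}\big[(X(\tau),R(\tau),C(\tau)) \in (dy,J,t)\big].$$ Define the projector $P$ on functions $f=f(x,I,s)$ of augmented states by $Pf(x,I,s) = \int \eta_I(dz)\, f(z,I,\tau_I)$, let $Q = \mathrm{Id}-P$, and for integers $n\ge 1$ let $K(n) = PT(QT)^{n-1}$. Let $\chi_J(x,I,s) = \delta_{I=J}$ and define matrices $$\mathcal K_{IJ}(n\tau) := K(n)\chi_J(x,I,s), \qquad \mathcal T_{IJ}(n\tau) := \int \eta_I(dx)\,\mathbb P^{x,I,\tau_I}\big[R(n\tau)=J\big]$$ (the former does not depend on $x$ or $s$). Then for every integer $n\ge 1$, $$\mathcal T(n\tau) = \sum_{m=1}^{n} \mathcal K(m\tau)\,\mathcal T((n-m)\tau).$$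
   Context: The macroscopic jump process $R(t)$ (defined at multiples of $\tau$) jumps from its current macrostate $I$ to $J\ne I$ at time $t$ iff $X(t-c)\in J$ for all $0\le c\le \tau_J$; otherwise it stays put. $C(t)$ is the consecutive time $X(t)$ has spent in its current macrostate, with the count stopped at $\tau_J$ if $X(t)\in J$. $\mathbb P^{x,I,s}$ denotes probability for the augmented chain started at $(X(0),R(0),C(0))=(x,I,s)$. A kernel $S(x,I,s;dy,J,t)$ acts on functions by $Sf(x,I,s) = \int\sum_{J,t} S(x,I,s;dy,J,t) f(y,J,t)$. The quasistationary distribution $\eta_I$ is a probability measure on $I$ with $\eta_I(\cdot)=\int\eta_I(dx)\mathbb P(X(t)\in\cdot\mid X(0)=x,\ X(s)\in I,\ s\le t)$ for all $t$. *)

theory Defs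
  imports "HOL-Probability.Probability"
begin

text \<open>Augmented states are triples (x, I, s): microstate x, macrostate label I,
  clock value s.\<close>

definition aug_space :: "'x measure \<Rightarrow> ('x \<times> 'i \<times> real) measure" where
  "aug_space M = M \<Otimes>\<^sub>M (count_space UNIV \<Otimes>\<^sub>M borel)"

definition kapply :: "('a \<Rightarrow> 'a measure) \<Rightarrow> ('a \<Rightarrow> real) \<Rightarrow> 'a \<Rightarrow> real" where
  "kapply S f a = (\<integral>b. f b \<partial>S a)"

definition projP :: "('i \<Rightarrow> 'x measure) \<Rightarrow> ('i \<Rightarrow> real)
    \<Rightarrow> ('x \<times> 'i \<times> real \<Rightarrow> real) \<Rightarrow> 'x \<times> 'i \<times> real \<Rightarrow> real" where
  "projP \<eta> \<tau>I f = (\<lambda>(x, I, s). \<integral>z. f (z, I, \<tau>I I) \<partial>\<eta> I)"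

definition projQ :: "('i \<Rightarrow> 'x measure) \<Rightarrow> ('i \<Rightarrow> real)
    \<Rightarrow> ('x \<times> 'i \<times> real \<Rightarrow> real) \<Rightarrow> 'x \<times> 'i \<times> real \<Rightarrow> real" where
  "projQ \<eta> \<tau>I f = (\<lambda>a. f a - projP \<eta> \<tau>I f a)"

definition Kop :: "('i \<Rightarrow> 'x measure) \<Rightarrow> ('i \<Rightarrow> real)
    \<Rightarrow> ('x \<times> 'i \<times> real \<Rightarrow> ('x \<times> 'i \<times> real) measure) \<Rightarrow> nat
    \<Rightarrow> ('x \<times> 'i \<times> real \<Rightarrow> real) \<Rightarrow> 'x \<times> 'i \<times> real \<Rightarrow> real" where
  "Kop \<eta> \<tau>I T n f =
     projP \<eta> \<tau>I (kapply T (((\<lambda>g. projQ \<eta> \<tau>I (kapply T g)) ^^ (n - 1)) f))"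

definition chi :: "'i \<Rightarrow> 'x \<times> 'i \<times> real \<Rightarrow> real" where
  "chi J = (\<lambda>(x, I, s). if I = J then 1 else 0)"

primrec nstep :: "'a measure \<Rightarrow> ('a \<Rightarrow> 'a measure) \<Rightarrow> nat \<Rightarrow> 'a \<Rightarrow> 'a measure" where
  "nstep A T 0 a = return A a"
| "nstep A T (Suc n) a = (nstep A T n a) \<bind> T"

definition calK :: "('i \<Rightarrow> 'x measure) \<Rightarrow> ('i \<Rightarrow> real)
    \<Rightarrow> ('x \<times> 'i \<times> real \<Rightarrow> ('x \<times> 'i \<times> real) measure) \<Rightarrow> nat
    \<Rightarrow> 'i \<Rightarrow> 'i \<Rightarrow> 'x \<Rightarrow> real \<Rightarrow> real" where
  "calK \<eta> \<tau>I T n I J x s = Kop \<eta> \<tau>I T n (chi J) (x, I, s)"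

definition calT :: "'x measure \<Rightarrow> ('i \<Rightarrow> 'x measure) \<Rightarrow> ('i \<Rightarrow> real)
    \<Rightarrow> ('x \<times> 'i \<times> real \<Rightarrow> ('x \<times> 'i \<times> real) measure) \<Rightarrow> nat
    \<Rightarrow> 'i \<Rightarrow> 'i \<Rightarrow> real" where
  "calT M \<eta> \<tau>I T n I J =
     (\<integral>x. measure (nstep (aug_space M) T n (x, I, \<tau>I I)) {b. fst (snd b) = J} \<partial>\<eta> I)"

end

theory Submission imports Defs begin

lemma chi_alt: "chi L a = (if fst (snd a) = L then 1 else 0)"
  by (cases a) (auto simp: chi_def)

lemma projP_alt: "projP \<eta> \<tau>I f a = (\<integral>z. f (z, fst (snd a), \<tau>I (fst (snd a))) \<partial>\<eta> (fst (snd a)))"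
  by (cases a) (auto simp: projP_def)

lemma prob_abs_bound:
  fixes f :: "'a \<Rightarrow> real"
  assumes "prob_space N" "f \<in> borel_measurable N" "\<And>x. x \<in> space N \<Longrightarrow> \<bar>f x\<bar> \<le> c"
  shows "\<bar>\<integral>x. f x \<partial>N\<bar> \<le> c"
proof -
  interpret prob_space N by fact
  have i: "integrable N f"
    using assms by (intro integrable_const_bound[where B=c]) auto
  show ?thesis
  proof -
    have "\<bar>\<integral>x. f x \<partial>N\<bar> \<le> (\<integral>x. \<bar>f x\<bar> \<partial>N)" using integral_norm_bound[of N f] by simp
    also have "\<dots> \<le> (\<integral>x. c \<partial>N)" using assms(3) i by (intro integral_mono) auto
    also have "\<dots> = c" by (simp add: prob_space)
    finally show ?thesis .
  qed
qed

locale aug =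
  fixes M :: "'x measure" and \<eta> :: "'i \<Rightarrow> 'x measure" and \<tau>I :: "'i \<Rightarrow> real"
    and T :: "'x \<times> 'i \<times> real \<Rightarrow> ('x \<times> 'i \<times> real) measure"
  assumes eta_prob: "\<And>I. prob_space (\<eta> I)"
    and eta_sets: "\<And>I. sets (\<eta> I) = sets M"
    and T_kernel: "T \<in> measurable (aug_space M) (prob_algebra (aug_space M))"
begin

abbreviation A :: "('x \<times> 'i \<times> real) measure" where "A \<equiv> aug_space M"

definition good :: "('x \<times> 'i \<times> real \<Rightarrow> real) \<Rightarrow> bool" where
  "good f \<longleftrightarrow> f \<in> borel_measurable A \<and> (\<exists>c. \<forall>a\<in>space A. \<bar>f a\<bar> \<le> c)"

definition eqon :: "('x \<times> 'i \<times> real \<Rightarrow> real) \<Rightarrow> ('x \<times> 'i \<times> real \<Rightarrow> real) \<Rightarrow> bool" where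
  "eqon f g \<longleftrightarrow> (\<forall>a\<in>space A. f a = g a)"

lemma space_A: "space A = space M \<times> UNIV \<times> UNIV"
  by (simp add: aug_space_def space_pair_measure)

lemma space_eta: "space (\<eta> I) = space M"
  using eta_sets sets_eq_imp_space_eq by blast

lemma T_prob: "a \<in> space A \<Longrightarrow> prob_space (T a)"
  using measurable_space[OF T_kernel] by (auto simp: space_prob_algebra)

lemma T_sets: "a \<in> space A \<Longrightarrow> sets (T a) = sets A"
  using measurable_space[OF T_kernel] by (auto simp: space_prob_algebra)

lemma T_space: "a \<in> space A \<Longrightarrow> space (T a) = space A"
  using T_sets sets_eq_imp_space_eq by blast

lemma T_sub: "T \<in> measurable A (subprob_algebra A)"
  using measurable_prob_algebraD[OF T_kernel] .

lemma meas_I: "(\<lambda>a. G (fst (snd a)) :: real) \<in> borel_measurable A"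
proof -
  have "(\<lambda>a. fst (snd a)) \<in> A \<rightarrow>\<^sub>M count_space UNIV"
    unfolding aug_space_def by measurable
  then show ?thesis by (rule measurable_compose) simp
qed

lemma pt_meas: "(\<lambda>z. (z, I, t)) \<in> measurable (\<eta> I) A"
  unfolding aug_space_def
  by (rule measurable_Pair[OF measurable_ident_sets[OF eta_sets] measurable_const]) (simp add: space_pair_measure)

lemma good_integrable_T: "good f \<Longrightarrow> a \<in> space A \<Longrightarrow> integrable (T a) f"
proof -
  assume g: "good f" and a: "a \<in> space A"
  interpret prob_space "T a" using T_prob[OF a] .
  from g obtain c where c: "\<forall>b\<in>space A. \<bar>f b\<bar> \<le> c" and m: "f \<in> borel_measurable A" by (auto simp: good_def)
  show ?thesis
  proof (rule integrable_const_bound[where B=c])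
    show "AE x in T a. norm (f x) \<le> c" using c T_space[OF a] by (intro AE_I2) auto
    show "f \<in> borel_measurable (T a)" using measurable_cong_sets[OF T_sets[OF a] refl, of "borel :: real measure"] m by simp
  qed
qed

lemma good_T: "good f \<Longrightarrow> good (kapply T f)"
proof -
  assume g: "good f"
  from g obtain c where c: "\<forall>b\<in>space A. \<bar>f b\<bar> \<le> c" and m: "f \<in> borel_measurable A" by (auto simp: good_def)
  have "kapply T f \<in> borel_measurable A"
    unfolding kapply_def
    by (rule measurable_compose[OF T_sub integral_measurable_subprob_algebra[OF m]])
  moreover have "\<forall>a\<in>space A. \<bar>kapply T f a\<bar> \<le> c"
  proof
    fix a assume a: "a \<in> space A"
    have "f \<in> borel_measurable (T a)" using measurable_cong_sets[OF T_sets[OF a] refl, of "borel :: real measure"] m by simp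
    then show "\<bar>kapply T f a\<bar> \<le> c" unfolding kapply_def
      using c T_space[OF a] T_prob[OF a] by (intro prob_abs_bound) auto
  qed
  ultimately show ?thesis by (auto simp: good_def)
qed

lemma T_cong: "eqon f g \<Longrightarrow> eqon (kapply T f) (kapply T g)"
  unfolding eqon_def kapply_def
proof
  fix a assume e: "\<forall>a\<in>space A. f a = g a" and a: "a \<in> space A"
  show "integral\<^sup>L (T a) f = integral\<^sup>L (T a) g" proof (rule Bochner_Integration.integral_cong)
    fix x assume "x \<in> space (T a)"
    then show "f x = g x" using e T_space[OF a] by simp
  qed simp
qed

lemma T_lin: "good f \<Longrightarrow> good g \<Longrightarrow> eqon (kapply T (\<lambda>a. f a + c * g a)) (\<lambda>a. kapply T f a + c * kapply T g a)"
  unfolding eqon_def kapply_def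
proof
  fix a assume f: "good f" and g: "good g" and a: "a \<in> space A"
  show "integral\<^sup>L (T a) (\<lambda>a. f a + c * g a) = integral\<^sup>L (T a) f + c * integral\<^sup>L (T a) g"
    using good_integrable_T[OF f a] good_integrable_T[OF g a] by simp
qed


lemma eqon_trans [trans]: "eqon f g \<Longrightarrow> eqon g h \<Longrightarrow> eqon f h"
  unfolding eqon_def by auto

lemma eqon_refl: "eqon f f"
  unfolding eqon_def by auto

lemma integrable_eta: "good f \<Longrightarrow> integrable (\<eta> I) (\<lambda>z. f (z, I, t))"
proof -
  assume g: "good f"
  from g obtain c where c: "\<forall>b\<in>space A. \<bar>f b\<bar> \<le> c" and m: "f \<in> borel_measurable A" by (auto simp: good_def)
  interpret prob_space "\<eta> I" using eta_prob .
  show ?thesis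
  proof (rule integrable_const_bound[where B=c])
    show "AE x in \<eta> I. norm (f (x, I, t)) \<le> c" using c by (intro AE_I2) (auto simp: space_eta space_A)
    show "(\<lambda>z. f (z, I, t)) \<in> borel_measurable (\<eta> I)" by (rule measurable_compose[OF pt_meas m])
  qed
qed

lemma projP_fun: "projP \<eta> \<tau>I f = (\<lambda>a. (\<lambda>I. \<integral>z. f (z, I, \<tau>I I) \<partial>\<eta> I) (fst (snd a)))"
  by (rule ext) (simp add: projP_alt)

lemma good_P: "good f \<Longrightarrow> good (projP \<eta> \<tau>I f)"
proof -
  assume g: "good f"
  from g obtain c where c: "\<forall>b\<in>space A. \<bar>f b\<bar> \<le> c" and m: "f \<in> borel_measurable A" by (auto simp: good_def)
  have "\<forall>a\<in>space A. \<bar>projP \<eta> \<tau>I f a\<bar> \<le> c"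
  proof
    fix a :: "'x \<times> 'i \<times> real"
    show "\<bar>projP \<eta> \<tau>I f a\<bar> \<le> c" unfolding projP_alt
      using c eta_prob measurable_compose[OF pt_meas m]
      by (intro prob_abs_bound) (auto simp: space_eta space_A)
  qed
  then show ?thesis unfolding good_def by (subst projP_fun) (auto intro: meas_I)
qed

lemma P_cong: "eqon f g \<Longrightarrow> projP \<eta> \<tau>I f = projP \<eta> \<tau>I g"
  unfolding eqon_def
proof
  fix a :: "'x \<times> 'i \<times> real" assume e: "\<forall>a\<in>space A. f a = g a"
  show "projP \<eta> \<tau>I f a = projP \<eta> \<tau>I g a" unfolding projP_alt
    by (rule Bochner_Integration.integral_cong) (use e in \<open>auto simp: space_eta space_A\<close>)
qed

lemma P_lin: "good f \<Longrightarrow> good g \<Longrightarrow> projP \<eta> \<tau>I (\<lambda>a. f a + c * g a) = (\<lambda>a. projP \<eta> \<tau>I f a + c * projP \<eta> \<tau>I g a)"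
  by (rule ext) (simp add: projP_alt integrable_eta)

lemma P_sum: "(\<And>L. L \<in> S \<Longrightarrow> good (f L)) \<Longrightarrow>
  projP \<eta> \<tau>I (\<lambda>a. \<Sum>L\<in>S. c L * f L a) p = (\<Sum>L\<in>S. c L * projP \<eta> \<tau>I (f L) p)"
  unfolding projP_alt
proof -
  assume g: "\<And>L. L \<in> S \<Longrightarrow> good (f L)"
  let ?I = "fst (snd p)"
  have "(\<integral>z. (\<Sum>L\<in>S. c L * f L (z, ?I, \<tau>I ?I)) \<partial>\<eta> ?I) = (\<Sum>L\<in>S. (\<integral>z. c L * f L (z, ?I, \<tau>I ?I) \<partial>\<eta> ?I))"
    by (rule Bochner_Integration.integral_sum) (rule integrable_mult_right, rule integrable_eta, erule g)
  then show "(\<integral>z. (\<Sum>L\<in>S. c L * f L (z, ?I, \<tau>I ?I)) \<partial>\<eta> ?I) = (\<Sum>L\<in>S. c L * (\<integral>z. f L (z, ?I, \<tau>I ?I) \<partial>\<eta> ?I))"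
    by simp
qed

lemma good_lin: "good f \<Longrightarrow> good g \<Longrightarrow> good (\<lambda>a. f a + c * g a)"
proof -
  assume f: "good f" and g: "good g"
  from f obtain c1 where c1: "\<forall>b\<in>space A. \<bar>f b\<bar> \<le> c1" and m1: "f \<in> borel_measurable A" by (auto simp: good_def)
  from g obtain c2 where c2: "\<forall>b\<in>space A. \<bar>g b\<bar> \<le> c2" and m2: "g \<in> borel_measurable A" by (auto simp: good_def)
  have "\<forall>b\<in>space A. \<bar>f b + c * g b\<bar> \<le> c1 + \<bar>c\<bar> * c2"
  proof
    fix b assume b: "b \<in> space A"
    have "\<bar>c * g b\<bar> \<le> \<bar>c\<bar> * c2" using c2 b by (simp add: abs_mult mult_left_mono)
    moreover have "\<bar>f b\<bar> \<le> c1" using c1 b by blast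
    ultimately show "\<bar>f b + c * g b\<bar> \<le> c1 + \<bar>c\<bar> * c2" using abs_triangle_ineq[of "f b" "c * g b"] by linarith
  qed
  moreover have "(\<lambda>a. f a + c * g a) \<in> borel_measurable A" using m1 m2 by measurable
  ultimately show ?thesis unfolding good_def by blast
qed

lemma good_zero: "good (\<lambda>a. 0)"
  unfolding good_def by auto

lemma good_sum: "finite S \<Longrightarrow> (\<And>L. L \<in> S \<Longrightarrow> good (f L)) \<Longrightarrow> good (\<lambda>a. \<Sum>L\<in>S. c L * f L a)"
proof (induction S rule: finite_induct)
  case empty then show ?case by (simp add: good_zero)
next
  case (insert L S)
  have "good (\<lambda>a. (\<Sum>L\<in>S. c L * f L a) + c L * f L a)"
    using insert by (intro good_lin) auto
  then show ?case using insert by (simp add: add.commute)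
qed

lemma good_Q: "good f \<Longrightarrow> good (projQ \<eta> \<tau>I f)"
  using good_lin[OF _ good_P, of f f "-1"] by (simp add: projQ_def[abs_def])

lemma Q_cong: assumes "eqon f g" shows "eqon (projQ \<eta> \<tau>I f) (projQ \<eta> \<tau>I g)"
  using assms P_cong[OF assms] unfolding eqon_def projQ_def by auto

lemma Q_lin: "good f \<Longrightarrow> good g \<Longrightarrow> eqon (projQ \<eta> \<tau>I (\<lambda>a. f a + c * g a)) (\<lambda>a. projQ \<eta> \<tau>I f a + c * projQ \<eta> \<tau>I g a)"
  unfolding eqon_def projQ_def by (simp add: P_lin algebra_simps)

definition W where "W = (\<lambda>g. projQ \<eta> \<tau>I (kapply T g))"

lemma good_W: "good f \<Longrightarrow> good ((W ^^ k) f)"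
  by (induction k) (auto simp: W_def good_Q good_T)

lemma W_cong: "eqon f g \<Longrightarrow> eqon ((W ^^ k) f) ((W ^^ k) g)"
  by (induction k) (auto simp: W_def Q_cong T_cong)

lemma W_lin: "good f \<Longrightarrow> good g \<Longrightarrow> eqon ((W ^^ k) (\<lambda>a. f a + c * g a)) (\<lambda>a. (W ^^ k) f a + c * (W ^^ k) g a)"
proof (induction k)
  case 0 then show ?case by (simp add: eqon_refl)
next
  case (Suc k)
  have "eqon (kapply T ((W ^^ k) (\<lambda>a. f a + c * g a))) (kapply T (\<lambda>a. (W ^^ k) f a + c * (W ^^ k) g a))"
    using Suc by (intro T_cong) auto
  also have "eqon \<dots> (\<lambda>a. kapply T ((W ^^ k) f) a + c * kapply T ((W ^^ k) g) a)"
    using Suc by (intro T_lin good_W) auto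
  finally have 1: "eqon (kapply T ((W ^^ k) (\<lambda>a. f a + c * g a))) (\<lambda>a. kapply T ((W ^^ k) f) a + c * kapply T ((W ^^ k) g) a)" .
  have "eqon (projQ \<eta> \<tau>I (kapply T ((W ^^ k) (\<lambda>a. f a + c * g a)))) (projQ \<eta> \<tau>I (\<lambda>a. kapply T ((W ^^ k) f) a + c * kapply T ((W ^^ k) g) a))"
    by (rule Q_cong[OF 1])
  also have "eqon \<dots> (\<lambda>a. projQ \<eta> \<tau>I (kapply T ((W ^^ k) f)) a + c * projQ \<eta> \<tau>I (kapply T ((W ^^ k) g)) a)"
    using Suc by (intro Q_lin good_T good_W) auto
  finally show ?case by (simp add: W_def)
qed

lemma op_sum:
  assumes lin: "\<And>f g c. good f \<Longrightarrow> good g \<Longrightarrow> eqon (op (\<lambda>a. f a + c * g a)) (\<lambda>a. op f a + c * op g a)"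
    and cong: "\<And>f g. eqon f g \<Longrightarrow> eqon (op f) (op g)"
    and fin: "finite S" and gd: "\<And>L. L \<in> S \<Longrightarrow> good (f L)"
  shows "eqon (op (\<lambda>a. \<Sum>L\<in>S. c L * f L a)) (\<lambda>a. \<Sum>L\<in>S. c L * op (f L) a)"
  using fin gd
proof (induction S rule: finite_induct)
  case empty
  have "eqon (op (\<lambda>a. 0 + 1 * 0)) (\<lambda>a. op (\<lambda>a. 0) a + 1 * op (\<lambda>a. 0) a)"
    by (rule lin[OF good_zero good_zero])
  then show ?case by (simp add: eqon_def)
next
  case (insert L S)
  have e: "(\<lambda>a. \<Sum>L\<in>insert L S. c L * f L a) = (\<lambda>a. (\<Sum>L\<in>S. c L * f L a) + c L * f L a)"
    using insert by (simp add: add.commute)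
  have "eqon (op (\<lambda>a. (\<Sum>L\<in>S. c L * f L a) + c L * f L a)) (\<lambda>a. op (\<lambda>a. \<Sum>L\<in>S. c L * f L a) a + c L * op (f L) a)"
    using insert by (intro lin good_sum) auto
  moreover have "eqon (op (\<lambda>a. \<Sum>L\<in>S. c L * f L a)) (\<lambda>a. \<Sum>L\<in>S. c L * op (f L) a)"
    using insert by auto
  ultimately show ?case using insert unfolding e eqon_def by (simp add: add.commute)
qed

lemma nstep_space: "a \<in> space A \<Longrightarrow> nstep A T k a \<in> space (prob_algebra A)"
proof (induction k)
  case 0 then show ?case by (simp add: space_prob_algebra prob_space_return)
next
  case (Suc k) then show ?case
    by (simp add: space_prob_algebra prob_space_bind'[OF _ T_kernel] sets_bind'[OF _ T_kernel])
qed

lemma nstep_integral: "good f \<Longrightarrow> a \<in> space A \<Longrightarrow> (\<integral>b. f b \<partial>nstep A T k a) = (kapply T ^^ k) f a"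
proof (induction k arbitrary: f)
  case 0 then show ?case by (simp add: integral_return good_def)
next
  case (Suc k)
  from Suc.prems obtain c where c: "\<forall>b\<in>space A. \<bar>f b\<bar> \<le> c" and m: "f \<in> borel_measurable A" by (auto simp: good_def)
  let ?N = "nstep A T k a"
  have Ns: "?N \<in> space (prob_algebra A)" using nstep_space[OF Suc.prems(2)] .
  then have Nsets: "sets ?N = sets A" and Np: "prob_space ?N" by (auto simp: space_prob_algebra)
  have Nsp: "space ?N = space A" using Nsets sets_eq_imp_space_eq by blast
  have Tm: "T \<in> measurable ?N (subprob_algebra A)"
    using T_sub measurable_cong_sets[OF Nsets refl, of "subprob_algebra A"] by simp
  have fin: "finite_measure ?N" using Np unfolding prob_space_def by blast
  have aeb: "AE x in ?N. emeasure (T x) (space (T x)) \<le> ennreal 1"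
    by (rule AE_I2) (simp add: Nsp prob_space.emeasure_space_1 T_prob)
  have cb: "\<And>x. x \<in> space A \<Longrightarrow> \<bar>f x\<bar> \<le> c" using c by blast
  have "(\<integral>b. f b \<partial>nstep A T (Suc k) a) = (\<integral>x. integral\<^sup>L (T x) f \<partial>?N)"
    unfolding nstep.simps by (rule integral_bind[OF m cb Tm fin aeb])
  also have "\<dots> = (\<integral>x. kapply T f x \<partial>?N)" by (simp add: kapply_def)
  also have "\<dots> = (kapply T ^^ k) (kapply T f) a" using Suc good_T by blast
  finally show ?case by (simp only: funpow_Suc_right comp_apply)
qed


lemma good_Tk: "good f \<Longrightarrow> good ((kapply T ^^ k) f)"
  by (induction k) (auto simp: good_T)

lemma Kop_W: "Kop \<eta> \<tau>I T m f = projP \<eta> \<tau>I (kapply T ((W ^^ (m - 1)) f))"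
  by (simp add: Kop_def W_def)

lemma tele:
  assumes g: "good f" and jn: "j < n"
  shows "projP \<eta> \<tau>I ((kapply T ^^ n) f) p =
    (\<Sum>m = 1..j. Kop \<eta> \<tau>I T m (projP \<eta> \<tau>I ((kapply T ^^ (n - m)) f)) p)
    + projP \<eta> \<tau>I (kapply T ((W ^^ j) ((kapply T ^^ (n - 1 - j)) f))) p"
  using jn
proof (induction j)
  case 0
  then obtain n' where n: "n = Suc n'" by (cases n) auto
  show ?case by (simp add: n)
next
  case (Suc j)
  let ?Tk = "\<lambda>k. (kapply T ^^ k) f"
  define r where "r = n - 1 - j"
  have r: "r = Suc (n - 1 - Suc j)" "n - Suc j = r" using Suc.prems by (auto simp: r_def)
  define g0 where "g0 = ?Tk (n - 1 - Suc j)"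
  have gg0: "good g0" unfolding g0_def using g by (rule good_Tk)
  have Tr: "?Tk r = kapply T g0" unfolding g0_def by (subst r(1)) simp
  have gTr: "good (?Tk r)" using g by (rule good_Tk)
  have split: "?Tk r = (\<lambda>a. projP \<eta> \<tau>I (?Tk r) a + 1 * projQ \<eta> \<tau>I (?Tk r) a)"
    by (simp add: projQ_def)
  have Qr: "projQ \<eta> \<tau>I (?Tk r) = W g0" by (simp add: Tr W_def)
  have e1: "eqon ((W ^^ j) (?Tk r)) (\<lambda>a. (W ^^ j) (projP \<eta> \<tau>I (?Tk r)) a + 1 * (W ^^ Suc j) g0 a)"
  proof -
    have h1: "eqon ((W ^^ j) (\<lambda>a. projP \<eta> \<tau>I (?Tk r) a + 1 * projQ \<eta> \<tau>I (?Tk r) a))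
      (\<lambda>a. (W ^^ j) (projP \<eta> \<tau>I (?Tk r)) a + 1 * (W ^^ j) (projQ \<eta> \<tau>I (?Tk r)) a)"
      by (rule W_lin[OF good_P[OF gTr] good_Q[OF gTr]])
    have w: "(W ^^ Suc j) g0 = (W ^^ j) (W g0)" by (simp only: funpow_Suc_right comp_apply)
    show ?thesis using h1 unfolding w Qr[symmetric] split[symmetric] .
  qed
  have "eqon (kapply T ((W ^^ j) (?Tk r))) (kapply T (\<lambda>a. (W ^^ j) (projP \<eta> \<tau>I (?Tk r)) a + 1 * (W ^^ Suc j) g0 a))"
    by (rule T_cong[OF e1])
  also have "eqon \<dots> (\<lambda>a. kapply T ((W ^^ j) (projP \<eta> \<tau>I (?Tk r))) a + 1 * kapply T ((W ^^ Suc j) g0) a)"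
    by (intro T_lin good_W good_P gTr gg0)
  finally have e2: "eqon (kapply T ((W ^^ j) (?Tk r))) (\<lambda>a. kapply T ((W ^^ j) (projP \<eta> \<tau>I (?Tk r))) a + 1 * kapply T ((W ^^ Suc j) g0) a)" .
  have e3: "projP \<eta> \<tau>I (kapply T ((W ^^ j) (?Tk r))) p = projP \<eta> \<tau>I (kapply T ((W ^^ j) (projP \<eta> \<tau>I (?Tk r)))) p + projP \<eta> \<tau>I (kapply T ((W ^^ Suc j) g0)) p"
    using P_cong[OF e2] P_lin[OF good_T[OF good_W[OF good_P[OF gTr], where k=j]] good_T[OF good_W[OF gg0, where k="Suc j"]], of 1]
    by (simp del: funpow.simps)
  have K: "Kop \<eta> \<tau>I T (Suc j) (projP \<eta> \<tau>I (?Tk (n - Suc j))) p = projP \<eta> \<tau>I (kapply T ((W ^^ j) (projP \<eta> \<tau>I (?Tk r)))) p"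
    by (simp add: Kop_W r(2))
  have IH: "projP \<eta> \<tau>I (?Tk n) p = (\<Sum>m = 1..j. Kop \<eta> \<tau>I T m (projP \<eta> \<tau>I (?Tk (n - m))) p) + projP \<eta> \<tau>I (kapply T ((W ^^ j) (?Tk r))) p"
    using Suc by (simp add: r_def)
  show ?case using IH e3 K by (simp add: g0_def)
qed


lemma good_const_I: "good (\<lambda>a. (\<lambda>I. if P I then 1 else 0 :: real) (fst (snd a)))"
  unfolding good_def
proof (intro conjI exI[of _ 1] ballI)
  show "(\<lambda>a. (\<lambda>I. if P I then 1 else 0 :: real) (fst (snd a))) \<in> borel_measurable A" by (rule meas_I)
  fix a :: "'x \<times> 'i \<times> real"
  show "\<bar>(\<lambda>I. if P I then 1 else 0 :: real) (fst (snd a))\<bar> \<le> 1" by simp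
qed

lemma good_chi: "good (chi L)"
proof -
  have e: "chi L = (\<lambda>a. (\<lambda>I. if I = L then 1 else 0 :: real) (fst (snd a)))"
    by (rule ext) (simp add: chi_alt)
  show ?thesis unfolding e by (rule good_const_I)
qed

lemma Pchi:
  assumes fin: "finite (UNIV :: 'i set)"
  shows "projP \<eta> \<tau>I g = (\<lambda>a. \<Sum>L\<in>UNIV. projP \<eta> \<tau>I g (x0, L, s0) * chi L a)"
proof (rule ext)
  fix a :: "'x \<times> 'i \<times> real"
  have "(\<Sum>L\<in>UNIV. projP \<eta> \<tau>I g (x0, L, s0) * chi L a) = (\<Sum>L\<in>UNIV. if fst (snd a) = L then projP \<eta> \<tau>I g (x0, L, s0) else 0)"
    by (rule sum.cong) (auto simp: chi_alt)
  also have "\<dots> = projP \<eta> \<tau>I g (x0, fst (snd a), s0)" using fin by simp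
  also have "\<dots> = projP \<eta> \<tau>I g a" by (simp add: projP_alt)
  finally show "projP \<eta> \<tau>I g a = (\<Sum>L\<in>UNIV. projP \<eta> \<tau>I g (x0, L, s0) * chi L a)" by simp
qed

lemma Kop_sum:
  assumes fin: "finite S" and gd: "\<And>L. L \<in> S \<Longrightarrow> good (f L)"
  shows "Kop \<eta> \<tau>I T m (\<lambda>a. \<Sum>L\<in>S. c L * f L a) p = (\<Sum>L\<in>S. c L * Kop \<eta> \<tau>I T m (f L) p)"
proof -
  let ?op = "\<lambda>F. kapply T ((W ^^ (m - 1)) F)"
  have lin: "eqon (?op (\<lambda>a. f a + c * g a)) (\<lambda>a. ?op f a + c * ?op g a)" if "good f" "good g" for f g c
  proof -
    have "eqon (?op (\<lambda>a. f a + c * g a)) (kapply T (\<lambda>a. (W ^^ (m - 1)) f a + c * (W ^^ (m - 1)) g a))"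
      using that by (intro T_cong W_lin)
    also have "eqon \<dots> (\<lambda>a. ?op f a + c * ?op g a)"
      using that by (intro T_lin good_W)
    finally show ?thesis .
  qed
  have cong: "eqon (?op f) (?op g)" if "eqon f g" for f g
    using that by (intro T_cong W_cong)
  have e: "eqon (?op (\<lambda>a. \<Sum>L\<in>S. c L * f L a)) (\<lambda>a. \<Sum>L\<in>S. c L * ?op (f L) a)"
    by (rule op_sum[where op="?op", OF lin cong fin gd])
  have "Kop \<eta> \<tau>I T m (\<lambda>a. \<Sum>L\<in>S. c L * f L a) p = projP \<eta> \<tau>I (\<lambda>a. \<Sum>L\<in>S. c L * ?op (f L) a) p"
    unfolding Kop_W using P_cong[OF e] by simp
  also have "\<dots> = (\<Sum>L\<in>S. c L * projP \<eta> \<tau>I (?op (f L)) p)"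
    by (rule P_sum) (intro good_T good_W gd)
  finally show ?thesis by (simp add: Kop_W)
qed

lemma main:
  assumes fin: "finite (UNIV :: 'i set)" and n: "n \<ge> 1"
  shows "calT M \<eta> \<tau>I T n I J = (\<Sum>m = 1..n. \<Sum>L\<in>UNIV. calK \<eta> \<tau>I T m I L x s * calT M \<eta> \<tau>I T (n - m) L J)"
proof -
  define S where "S = {b :: 'x \<times> 'i \<times> real. fst (snd b) = J}"
  define h :: "'x \<times> 'i \<times> real \<Rightarrow> real" where "h = (\<lambda>a. (\<lambda>I. if S \<in> sets A \<and> I = J then 1 else 0 :: real) (fst (snd a)))"
  have Smem: "b \<in> S \<longleftrightarrow> fst (snd b) = J" for b by (simp add: S_def)
  have gh: "good h" unfolding h_def by (rule good_const_I)
  have Ph: "projP \<eta> \<tau>I h = h"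
    by (rule ext) (simp add: projP_alt h_def prob_space.prob_space[OF eta_prob])
  have meas_h: "measure (nstep A T k a) S = (kapply T ^^ k) h a" if a: "a \<in> space A" for a k
  proof -
    let ?N = "nstep A T k a"
    have Ns: "?N \<in> space (prob_algebra A)" using nstep_space[OF a] .
    then have Nsets: "sets ?N = sets A" by (auto simp: space_prob_algebra)
    have Nsp: "space ?N = space A" using Nsets sets_eq_imp_space_eq by blast
    have "measure ?N S = (\<integral>b. h b \<partial>?N)"
    proof (cases "S \<in> sets A")
      case True
      then have SN: "S \<in> sets ?N" using Nsets by simp
      have "measure ?N S = measure ?N (S \<inter> space ?N)"
        using sets.sets_into_space[OF SN] by (simp add: Int_absorb2)
      also have "\<dots> = (\<integral>b. indicator S b \<partial>?N)" by simp
      also have "\<dots> = (\<integral>b. h b \<partial>?N)"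
        by (rule Bochner_Integration.integral_cong) (auto simp: h_def Smem True indicator_def)
      finally show ?thesis .
    next
      case False
      then have "S \<notin> sets ?N" using Nsets by simp
      then have "measure ?N S = 0" by (rule measure_notin_sets)
      moreover have "h = (\<lambda>b. 0)" by (rule ext) (simp add: h_def False)
      ultimately show ?thesis by simp
    qed
    also have "\<dots> = (kapply T ^^ k) h a" by (rule nstep_integral[OF gh a])
    finally show ?thesis .
  qed
  have calT_eq: "calT M \<eta> \<tau>I T k L J = projP \<eta> \<tau>I ((kapply T ^^ k) h) (x', L, s')" for k L x' s'
    unfolding calT_def projP_alt
  proof (simp, rule Bochner_Integration.integral_cong)
    fix z assume "z \<in> space (\<eta> L)"
    then have "(z, L, \<tau>I L) \<in> space A" by (simp add: space_eta space_A)
    then show "measure (nstep A T k (z, L, \<tau>I L)) {b. fst (snd b) = J} = (kapply T ^^ k) h (z, L, \<tau>I L)"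
      using meas_h unfolding S_def by blast
  qed simp
  have PTk: "projP \<eta> \<tau>I ((kapply T ^^ k) h) = (\<lambda>a. \<Sum>L\<in>UNIV. calT M \<eta> \<tau>I T k L J * chi L a)" for k
    using Pchi[OF fin, of "(kapply T ^^ k) h" x s] calT_eq[of k _ x s] by simp
  obtain n' where n': "n = Suc n'" using n by (cases n) auto
  have "calT M \<eta> \<tau>I T n I J = projP \<eta> \<tau>I ((kapply T ^^ n) h) (x, I, s)" by (rule calT_eq)
  also have "\<dots> = (\<Sum>m = 1..n'. Kop \<eta> \<tau>I T m (projP \<eta> \<tau>I ((kapply T ^^ (n - m)) h)) (x, I, s))
    + projP \<eta> \<tau>I (kapply T ((W ^^ n') ((kapply T ^^ (n - 1 - n')) h))) (x, I, s)"
    by (rule tele[OF gh]) (simp add: n')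
  also have "projP \<eta> \<tau>I (kapply T ((W ^^ n') ((kapply T ^^ (n - 1 - n')) h))) (x, I, s)
      = Kop \<eta> \<tau>I T n (projP \<eta> \<tau>I ((kapply T ^^ (n - n)) h)) (x, I, s)"
    by (simp add: Kop_W n' Ph)
  also have "(\<Sum>m = 1..n'. Kop \<eta> \<tau>I T m (projP \<eta> \<tau>I ((kapply T ^^ (n - m)) h)) (x, I, s))
      + Kop \<eta> \<tau>I T n (projP \<eta> \<tau>I ((kapply T ^^ (n - n)) h)) (x, I, s)
      = (\<Sum>m = 1..n. Kop \<eta> \<tau>I T m (projP \<eta> \<tau>I ((kapply T ^^ (n - m)) h)) (x, I, s))"
    by (simp add: n')
  also have "\<dots> = (\<Sum>m = 1..n. \<Sum>L\<in>UNIV. calK \<eta> \<tau>I T m I L x s * calT M \<eta> \<tau>I T (n - m) L J)"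
  proof (rule sum.cong)
    fix m assume "m \<in> {1..n}"
    show "Kop \<eta> \<tau>I T m (projP \<eta> \<tau>I ((kapply T ^^ (n - m)) h)) (x, I, s)
      = (\<Sum>L\<in>UNIV. calK \<eta> \<tau>I T m I L x s * calT M \<eta> \<tau>I T (n - m) L J)"
      unfolding PTk calK_def
      by (subst Kop_sum[OF fin good_chi]) (simp add: mult.commute)
  qed simp
  finally show ?thesis .
qed

end

theorem theorem2:
  fixes M :: "'x measure"
    and mac :: "'x \<Rightarrow> 'i::finite"
    and \<eta> :: "'i \<Rightarrow> 'x measure"
    and \<tau> :: real
    and \<tau>I :: "'i \<Rightarrow> real"
    and T :: "'x \<times> 'i \<times> real \<Rightarrow> ('x \<times> 'i \<times> real) measure"
    and n :: nat
  assumes tau_pos: "\<tau> > 0"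
    and tauI_pos: "\<And>I. \<tau>I I > 0"
    and mac_meas: "mac \<in> measurable M (count_space UNIV)"
    and eta_prob: "\<And>I. prob_space (\<eta> I)"
    and eta_sets: "\<And>I. sets (\<eta> I) = sets M"
    and eta_supp: "\<And>I. AE z in \<eta> I. mac z = I"
    and T_kernel: "T \<in> measurable (aug_space M) (prob_algebra (aug_space M))"
    and n_pos: "n \<ge> 1"
  shows "\<forall>x s. calT M \<eta> \<tau>I T n I J =
           (\<Sum>m = 1..n. \<Sum>L\<in>UNIV. calK \<eta> \<tau>I T m I L x s * calT M \<eta> \<tau>I T (n - m) L J)"
proof (intro allI)
  fix x s
  interpret aug M \<eta> \<tau>I T using eta_prob eta_sets T_kernel by (simp add: aug_def)
  show "calT M \<eta> \<tau>I T n I J =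
           (\<Sum>m = 1..n. \<Sum>L\<in>UNIV. calK \<eta> \<tau>I T m I L x s * calT M \<eta> \<tau>I T (n - m) L J)"
    by (rule main[OF finite n_pos])
qed

end
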